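(* Let $A$ be a real $m\times m$ matrix, $f$ in the range of $A$, $y$ the minimal-norm solution of $Ay=f$. Fix $q\in(0,1)$, $C>1$, $\varepsilon\in(0,1)$. For each $\delta\in(0,1)$ let $f_\delta\in\mathbb{R}^m$ with $\|f_\delta-f\|\le\delta$, and let $n_\delta$ be the smallest integer $n\ge1$ with $\|AT_{q^{n}}^{-1}A^*f_\delta-f_\delta\|\le C\delta^\varepsilon$. Then $$\lim_{\delta\to0}\frac{\delta}{\sqrt{q^{n_\delta}}}=0.$$
   Context: $A^*$ is the transpose of $A$, $T:=A^*A$, $T_a:=T+aI$ for $a>0$; $\|\cdot\|$ is the Euclidean norm. *)

theory Defs
  imports "HOL-Analysis.Analysis"
begin

definition Tmat :: "real^'m^'m \<Rightarrow> real \<Rightarrow> real^'m^'m" where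
  "Tmat A a = transpose A ** A + a *\<^sub>R mat 1"

definition resid :: "real^'m^'m \<Rightarrow> real \<Rightarrow> real^'m \<Rightarrow> real^'m" where
  "resid A a g = A *v (matrix_inv (Tmat A a) *v (transpose A *v g)) - g"

definition stop_index :: "real^'m^'m \<Rightarrow> real \<Rightarrow> real \<Rightarrow> real \<Rightarrow> real \<Rightarrow> real^'m \<Rightarrow> nat" where
  "stop_index A q C \<epsilon> \<delta> g = (LEAST n::nat. 1 \<le> n \<and> norm (resid A (q ^ n) g) \<le> C * \<delta> powr \<epsilon>)"

end

theory Submission
  imports Defs
begin

lemma adj: "(A *v x) \<bullet> (y::real^'n) = x \<bullet> (transpose A *v y)"
  by (metis dot_lmul_matrix inner_commute transpose_matrix_vector)

lemma Tmat_inv: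
  fixes A :: "real^'m^'m"
  assumes a: "a > 0"
  shows "Tmat A a *v (matrix_inv (Tmat A a) *v v) = v"
proof -
  have Tv: "Tmat A a *v x = transpose A *v (A *v x) + a *\<^sub>R x" for x
    by (simp add: Tmat_def matrix_vector_mult_add_rdistrib matrix_vector_mul_assoc
         flip: scaleR_matrix_vector_assoc)
  have "\<forall>x. Tmat A a *v x = 0 \<longrightarrow> x = 0"
  proof (intro allI impI)
    fix x assume "Tmat A a *v x = 0"
    hence "x \<bullet> (transpose A *v (A *v x) + a *\<^sub>R x) = 0" by (simp add: Tv)
    hence "(A *v x) \<bullet> (A *v x) + a * (x \<bullet> x) = 0"
      by (simp add: inner_add_right adj)
    moreover have "(A *v x) \<bullet> (A *v x) \<ge> 0" by simp
    moreover have "x \<bullet> x \<ge> 0" by simp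
    ultimately have "x \<bullet> x = 0" using a
      by (smt (verit, best) mult_pos_pos)
    thus "x = 0" by simp
  qed
  then obtain B where "B ** Tmat A a = mat 1" using matrix_left_invertible_ker by blast
  hence "Tmat A a ** B = mat 1 \<and> B ** Tmat A a = mat 1"
    using matrix_left_right_inverse by blast
  hence "Tmat A a ** matrix_inv (Tmat A a) = mat 1"
    unfolding matrix_inv_def by (rule someI2) auto
  thus ?thesis by (simp add: matrix_vector_mul_assoc)
qed

lemma resid_eq:
  fixes A :: "real^'m^'m"
  assumes a: "a > 0"
  shows "a *\<^sub>R resid A a g + A *v (transpose A *v resid A a g) = - a *\<^sub>R g"
    "transpose A *v resid A a g = - a *\<^sub>R (matrix_inv (Tmat A a) *v (transpose A *v g))"
proof -
  define x where "x = matrix_inv (Tmat A a) *v (transpose A *v g)"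
  have Tv: "Tmat A a *v x = transpose A *v (A *v x) + a *\<^sub>R x"
    by (simp add: Tmat_def matrix_vector_mult_add_rdistrib matrix_vector_mul_assoc
         flip: scaleR_matrix_vector_assoc)
  have "Tmat A a *v x = transpose A *v g" using Tmat_inv[OF a] x_def by simp
  hence e: "transpose A *v (A *v x) + a *\<^sub>R x = transpose A *v g" using Tv by simp
  have r: "resid A a g = A *v x - g" by (simp add: resid_def x_def)
  show t: "transpose A *v resid A a g = - a *\<^sub>R (matrix_inv (Tmat A a) *v (transpose A *v g))"
    using e unfolding r x_def[symmetric] by (simp add: matrix_vector_mult_diff_distrib algebra_simps)
  show "a *\<^sub>R resid A a g + A *v (transpose A *v resid A a g) = - a *\<^sub>R g"
  proof -
    have "A *v (transpose A *v (A *v x) + a *\<^sub>R x) = A *v (transpose A *v g)" using e by simp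
    hence "A *v (transpose A *v (A *v x)) + a *\<^sub>R (A *v x) = A *v (transpose A *v g)"
      by (simp del: transpose_matrix_vector add: matrix_vector_right_distrib matrix_vector_mult_scaleR)
    thus ?thesis unfolding t x_def[symmetric] r
      by (simp del: transpose_matrix_vector add: algebra_simps matrix_vector_mult_scaleR)
  qed
qed

lemma resid_bound1:
  fixes A :: "real^'m^'m"
  assumes a: "a > 0"
  shows "norm (resid A a g) \<le> norm g"
proof -
  let ?r = "resid A a g"
  have "?r \<bullet> (a *\<^sub>R ?r + A *v (transpose A *v ?r)) = ?r \<bullet> (- a *\<^sub>R g)"
    by (simp only: resid_eq(1)[OF a])
  moreover have "?r \<bullet> (A *v (transpose A *v ?r)) = (transpose A *v ?r) \<bullet> (transpose A *v ?r)"
    by (metis adj inner_commute)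
  ultimately have "a * (?r \<bullet> ?r) + (transpose A *v ?r) \<bullet> (transpose A *v ?r) = - a * (?r \<bullet> g)"
    by (simp del: transpose_matrix_vector add: inner_add_right)
  moreover have "(transpose A *v ?r) \<bullet> (transpose A *v ?r) \<ge> 0" by simp
  moreover have "- (?r \<bullet> g) \<le> norm ?r * norm g"
    by (metis Cauchy_Schwarz_ineq2 abs_le_D2)
  ultimately have "a * (norm ?r)^2 \<le> a * (norm ?r * norm g)"
  proof -
    assume h: "a * (?r \<bullet> ?r) + (transpose A *v ?r) \<bullet> (transpose A *v ?r) = - a * (?r \<bullet> g)"
      "(transpose A *v ?r) \<bullet> (transpose A *v ?r) \<ge> 0" "- (?r \<bullet> g) \<le> norm ?r * norm g"
    have "a * (- (?r \<bullet> g)) \<le> a * (norm ?r * norm g)" using h(3) a by (intro mult_left_mono) auto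
    thus ?thesis using h(1,2) unfolding power2_norm_eq_inner by linarith
  qed
  hence "(norm ?r)^2 \<le> norm ?r * norm g" using a by simp
  thus ?thesis
    by (smt (verit, ccfv_SIG) mult_le_cancel_left norm_ge_zero power2_eq_square)
qed

lemma resid_bound2:
  fixes A :: "real^'m^'m"
  assumes a: "a > 0"
  shows "norm (resid A a (A *v y)) \<le> sqrt a * norm y / 2"
proof -
  let ?r = "resid A a (A *v y)"
  let ?s = "transpose A *v ?r"
  have "?r \<bullet> (a *\<^sub>R ?r + A *v ?s) = ?r \<bullet> (- a *\<^sub>R (A *v y))"
    by (simp only: resid_eq(1)[OF a])
  moreover have "?r \<bullet> (A *v ?s) = ?s \<bullet> ?s"
    by (metis adj inner_commute)
  moreover have "?r \<bullet> (A *v y) = ?s \<bullet> y"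
    by (metis adj inner_commute)
  ultimately have "a * (?r \<bullet> ?r) + ?s \<bullet> ?s = - a * (?s \<bullet> y)"
    by (simp del: transpose_matrix_vector add: inner_add_right)
  moreover have "- (?s \<bullet> y) \<le> norm ?s * norm y"
    by (metis Cauchy_Schwarz_ineq2 abs_le_D2)
  ultimately have "a * (norm ?r)^2 + (norm ?s)^2 \<le> a * (norm ?s * norm y)"
  proof -
    assume h: "a * (?r \<bullet> ?r) + ?s \<bullet> ?s = - a * (?s \<bullet> y)" "- (?s \<bullet> y) \<le> norm ?s * norm y"
    have "a * (- (?s \<bullet> y)) \<le> a * (norm ?s * norm y)" using h(2) a by (intro mult_left_mono) auto
    thus ?thesis using h(1) unfolding power2_norm_eq_inner by linarith
  qed
  moreover have "a * (norm ?s * norm y) - (norm ?s)^2 \<le> (a * norm y)^2 / 4"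
  proof -
    have "0 \<le> (a * norm y / 2 - norm ?s)^2" by simp
    also have "\<dots> = (a * norm y)^2 / 4 - (a * (norm ?s * norm y) - (norm ?s)^2)"
      by (simp add: power2_diff power_mult_distrib power_divide algebra_simps)
    finally show ?thesis by linarith
  qed
  moreover have "(a * norm y)^2 / 4 = a * (a * (norm y)^2 / 4)"
    by (simp add: power_mult_distrib power2_eq_square)
  ultimately have "a * (norm ?r)^2 \<le> a * (a * (norm y)^2 / 4)"
    by linarith
  hence "(norm ?r)^2 \<le> a * (norm y)^2 / 4" using a by simp
  also have "\<dots> = (sqrt a * norm y / 2)^2" using a
    by (simp add: power_mult_distrib power_divide)
  finally show ?thesis
    by (rule power2_le_imp_le) (use a in auto)
qed


lemma resid_diff:
  "resid A a g - resid A a h = resid A a (g - h)"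
  by (simp add: resid_def matrix_vector_mult_diff_distrib algebra_simps)

lemma gen: "(d::real) = E * p \<Longrightarrow> E > 0 \<Longrightarrow> C - p > 0 \<Longrightarrow> ny > 0 \<Longrightarrow> sq > 0 \<Longrightarrow>
   d / (sq * (2 * (E * (C - p)) / ny)) = ny / (2 * sq) * (p / (C - p))"
  by (simp add: field_simps)

theorem lemma3p5:
  fixes A :: "real^'m^'m" and f y :: "real^'m"
    and fd :: "real \<Rightarrow> real^'m"
    and q C \<epsilon> :: real
  assumes "f \<in> range (\<lambda>x. A *v x)"
    and "A *v y = f" and "\<forall>z. A *v z = f \<longrightarrow> norm y \<le> norm z"
    and "0 < q" "q < 1" "C > 1" "0 < \<epsilon>" "\<epsilon> < 1"
    and "\<forall>\<delta>. 0 < \<delta> \<and> \<delta> < 1 \<longrightarrow> norm (fd \<delta> - f) \<le> \<delta>"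
  shows "((\<lambda>\<delta>. \<delta> / sqrt (q ^ stop_index A q C \<epsilon> \<delta> (fd \<delta>))) \<longlongrightarrow> 0) (at_right 0)"
proof -
  note q = assms(4,5) and Cg = assms(6) and e = assms(7,8)
  define N where "N \<delta> = stop_index A q C \<epsilon> \<delta> (fd \<delta>)" for \<delta>
  define P where "P \<delta> = \<delta> powr (1 - \<epsilon>)" for \<delta> :: real
  define U where "U \<delta> = \<delta> / sqrt q + (norm y / (2 * sqrt q)) * (P \<delta> / (C - P \<delta>))" for \<delta>
  have bound: "\<delta> / sqrt (q ^ N \<delta>) \<le> U \<delta>" if d: "0 < \<delta>" "\<delta> < 1" for \<delta>
  proof -
    have P0: "0 \<le> P \<delta>" by (simp add: P_def)
    have P1: "P \<delta> < 1" unfolding P_def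
      using powr_less_mono2[of "1 - \<epsilon>" \<delta> 1] d e by simp
    have t2: "0 \<le> (norm y / (2 * sqrt q)) * (P \<delta> / (C - P \<delta>))"
      using P0 P1 Cg q by simp
    show ?thesis
    proof (cases "N \<delta> \<le> 1")
      case True
      have "q \<le> q ^ N \<delta>"
      proof (cases "N \<delta> = 0")
        case True thus ?thesis using q by simp
      next
        case False hence "N \<delta> = 1" using \<open>N \<delta> \<le> 1\<close> by simp
        thus ?thesis by simp
      qed
      hence "sqrt q \<le> sqrt (q ^ N \<delta>)" by simp
      hence "\<delta> / sqrt (q ^ N \<delta>) \<le> \<delta> / sqrt q"
        using d q by (intro divide_left_mono) auto
      thus ?thesis using t2 unfolding U_def by linarith
    next
      case False
      define k where "k = N \<delta> - 1"
      have k1: "1 \<le> k" using False k_def by simp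
      have kN: "k < N \<delta>" using False k_def by simp
      have Nk: "N \<delta> = Suc k" using False k_def by simp
      define a where "a = q ^ k"
      have a: "a > 0" using q a_def by simp
      have notk: "\<not> (norm (resid A a (fd \<delta>)) \<le> C * \<delta> powr \<epsilon>)"
        using not_less_Least[OF kN[unfolded N_def stop_index_def]] k1 a_def by blast
      have "resid A a (fd \<delta>) = resid A a f + resid A a (fd \<delta> - f)"
        using resid_diff[of A a "fd \<delta>" f] by (simp add: algebra_simps)
      hence "norm (resid A a (fd \<delta>)) \<le> norm (resid A a f) + norm (resid A a (fd \<delta> - f))"
        by (metis norm_triangle_ineq)
      also have "\<dots> \<le> sqrt a * norm y / 2 + \<delta>"
      proof -
        have "norm (resid A a f) \<le> sqrt a * norm y / 2"
          using resid_bound2[OF a, of A y] assms(2) by simp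
        moreover have "norm (resid A a (fd \<delta> - f)) \<le> \<delta>"
          using resid_bound1[OF a, of A "fd \<delta> - f"] assms(9) d by force
        ultimately show ?thesis by linarith
      qed
      finally have lt: "C * \<delta> powr \<epsilon> - \<delta> < sqrt a * norm y / 2" using notk by linarith
      have dsplit: "\<delta> = \<delta> powr \<epsilon> * P \<delta>"
        unfolding P_def using d by (simp flip: powr_add)
      have de: "\<delta> powr \<epsilon> > 0" using d by simp
      have pos: "0 < \<delta> powr \<epsilon> * (C - P \<delta>)" using de P1 Cg by simp
      have eq: "C * \<delta> powr \<epsilon> - \<delta> = \<delta> powr \<epsilon> * (C - P \<delta>)"
        by (subst (2) dsplit) (simp add: algebra_simps)
      have ny: "norm y > 0"
      proof (rule ccontr)
        assume "\<not> norm y > 0" hence "norm y = 0" by simp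
        thus False using lt eq pos by simp
      qed
      have Y: "0 < 2 * (\<delta> powr \<epsilon> * (C - P \<delta>)) / norm y" using pos ny by simp
      have Ya: "2 * (\<delta> powr \<epsilon> * (C - P \<delta>)) / norm y < sqrt a"
        using lt eq ny by (simp add: field_simps)
      have sq: "sqrt (q ^ N \<delta>) = sqrt q * sqrt a"
        by (simp add: Nk a_def real_sqrt_mult)
      have "\<delta> / sqrt (q ^ N \<delta>) \<le> \<delta> / (sqrt q * (2 * (\<delta> powr \<epsilon> * (C - P \<delta>)) / norm y))"
        unfolding sq using d q Y Ya a
        by (intro divide_left_mono mult_left_mono mult_pos_pos) auto
      also have "\<dots> = (norm y / (2 * sqrt q)) * (P \<delta> / (C - P \<delta>))"
        using gen[OF dsplit de _ ny] P1 Cg q by simp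
      moreover have "0 \<le> \<delta> / sqrt q" using d q by simp
      ultimately show ?thesis unfolding U_def by linarith
    qed
  qed
  have ev: "eventually (\<lambda>\<delta>. 0 < \<delta> \<and> \<delta> < 1) (at_right (0::real))"
    using eventually_at_right_real[of 0 1] by simp
  have lP: "(P \<longlongrightarrow> 0) (at_right 0)"
    unfolding P_def
    by (rule tendsto_zero_powrI[where b="1 - \<epsilon>"]) (use e in \<open>auto intro: tendsto_ident_at eventually_at_rightI[of 0 1]\<close>)
  have lU: "(U \<longlongrightarrow> 0) (at_right 0)"
  proof -
    have "(U \<longlongrightarrow> 0 / sqrt q + (norm y / (2 * sqrt q)) * (0 / (C - 0))) (at_right 0)"
      unfolding U_def using Cg q
      by (intro tendsto_intros lP tendsto_ident_at) auto
    thus ?thesis by simp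
  qed
  show ?thesis
    unfolding N_def[symmetric]
  proof (rule real_tendsto_sandwich[of "\<lambda>_. 0" _ _ U])
    show "eventually (\<lambda>\<delta>. 0 \<le> \<delta> / sqrt (q ^ N \<delta>)) (at_right 0)"
      using ev by eventually_elim (use q in simp)
    show "eventually (\<lambda>\<delta>. \<delta> / sqrt (q ^ N \<delta>) \<le> U \<delta>) (at_right 0)"
      using ev by eventually_elim (use bound in auto)
  qed (auto intro: lU)
qed

end
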